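(* Let $k\ge2$ and let $G=(\{a,b\},\varphi,a)$ be a circular D0L-system with $\varphi$ $k$-uniform. Then no vertex of the graph of overhangs $GO_G$ carries two distinct loops (two distinct edges from the vertex to itself).
   Context: A D0L-system $G=(\mathcal{A},\varphi,w)$ has $L(G)=\{\varphi^n(w)\}$ and $S(L(G))$ the set of factors of its words. An interpretation of $u\in S(L(G))$ is $(p,v,s)$ with $v\in S(L(G))$, $\varphi(v)=pus$. With $v=v_1\cdots v_n$, $v'=v'_1\cdots v'_m$, $u=u_1\cdots u_\ell$, interpretations $(p,v,s),(p',v',s')$ are synchronized at position $j$ if $\varphi(v_1\cdots v_i)=pu_1\cdots u_j$ and $\varphi(v'_1\cdots v'_{i'})=p'u_1\cdots u_j$ for some $i,i'$; $u$ has a synchronizing point at $j$ if all its interpretations are pairwise synchronized at $j$. A PD0L-system injective on $S(L(G))$ is circular if there is $Z$ such that every $u\in S(L(G))$ with $|u|>Z$ has a synchronizing point. $\varphi$ is $k$-uniform if $|\varphi(a)|=|\varphi(b)|=k$. Let $X=\{\varphi(a),\varphi(b)\}$. An overhang is a triple $(u_1\cdots u_m,v_1\cdots v_n,|x|)$ with $u_i,v_j\in X$, $x$ nonempty, such that: (i) $x$ is a suffix of $u_1\cdots u_m$ but not of $u_2\cdots u_m$; (ii) $x$ is a prefix of $v_1\cdots v_n$ but not of $v_1\cdots v_{n-1}$; (iii) $x\ne u_1\cdots u_m$ or $x\ne v_1\cdots v_n$; (iv) $|v_1\cdots v_{n-1}|<|x(u_2\cdots u_m)^{-1}|$. Its left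 overhang is $u_1\cdots u_mx^{-1}$, right overhang $x^{-1}v_1\cdots v_n$. $GO_G$ has an edge from $s_1$ to $s_2$ labelled by each overhang with left overhang $s_1$ and right overhang $s_2$. *)

theory Defs
  imports Main "HOL-Library.Sublist"
begin

datatype letter = La | Lb

type_synonym word = "letter list"

definition morph :: "(letter \<Rightarrow> word) \<Rightarrow> word \<Rightarrow> word" where
  "morph f w = concat (map f w)"

definition d0l_language :: "(letter \<Rightarrow> word) \<Rightarrow> word \<Rightarrow> word set" where
  "d0l_language f ax = {(morph f ^^ n) ax | n. True}"

definition factors :: "word set \<Rightarrow> word set" where
  "factors L = {u. \<exists>w\<in>L. \<exists>p s. w = p @ u @ s}"

abbreviation SL :: "(letter \<Rightarrow> word) \<Rightarrow> word \<Rightarrow> word set" where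
  "SL f ax \<equiv> factors (d0l_language f ax)"

definition interp :: "(letter \<Rightarrow> word) \<Rightarrow> word \<Rightarrow> word \<Rightarrow> word \<times> word \<times> word \<Rightarrow> bool" where
  "interp f ax u I \<longleftrightarrow>
     (case I of (p, v, s) \<Rightarrow> v \<in> SL f ax \<and> morph f v = p @ u @ s)"

definition synchronized_at :: "(letter \<Rightarrow> word) \<Rightarrow> word \<Rightarrow> nat \<Rightarrow> word \<times> word \<times> word \<Rightarrow> word \<times> word \<times> word \<Rightarrow> bool" where
  "synchronized_at f u j I I' \<longleftrightarrow>
     (case I of (p, v, s) \<Rightarrow> case I' of (p', v', s') \<Rightarrow>
        \<exists>i i'. i \<le> length v \<and> i' \<le> length v' \<and>
          morph f (take i v) = p @ take j u \<and> morph f (take i' v') = p' @ take j u)"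

definition has_sync_point_at :: "(letter \<Rightarrow> word) \<Rightarrow> word \<Rightarrow> word \<Rightarrow> nat \<Rightarrow> bool" where
  "has_sync_point_at f ax u j \<longleftrightarrow> j \<le> length u \<and>
     (\<forall>I I'. interp f ax u I \<longrightarrow> interp f ax u I' \<longrightarrow> synchronized_at f u j I I')"

definition circular :: "(letter \<Rightarrow> word) \<Rightarrow> word \<Rightarrow> bool" where
  "circular f ax \<longleftrightarrow>
     (\<forall>c. f c \<noteq> []) \<and> inj_on (morph f) (SL f ax) \<and>
     (\<exists>Z::nat. \<forall>u\<in>SL f ax. length u > Z \<longrightarrow> (\<exists>j. has_sync_point_at f ax u j))"

definition uniform :: "nat \<Rightarrow> (letter \<Rightarrow> word) \<Rightarrow> bool" where
  "uniform k f \<longleftrightarrow> length (f La) = k \<and> length (f Lb) = k"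

definition overhang :: "(letter \<Rightarrow> word) \<Rightarrow> word \<times> word \<times> nat \<Rightarrow> bool" where
  "overhang f ov \<longleftrightarrow> (case ov of (U, V, l) \<Rightarrow>
     \<exists>us vs x. us \<noteq> [] \<and> vs \<noteq> [] \<and> set us \<subseteq> {f La, f Lb} \<and> set vs \<subseteq> {f La, f Lb} \<and>
       U = concat us \<and> V = concat vs \<and> x \<noteq> [] \<and> l = length x \<and>
       suffix x (concat us) \<and> \<not> suffix x (concat (tl us)) \<and>
       prefix x (concat vs) \<and> \<not> prefix x (concat (butlast vs)) \<and>
       (x \<noteq> concat us \<or> x \<noteq> concat vs) \<and>
       length (concat (butlast vs)) < length x - length (concat (tl us)))"

text \<open>Left overhang U x^{-1} and right overhang x^{-1} V.\<close>
definition left_overhang :: "word \<times> word \<times> nat \<Rightarrow> word" where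
  "left_overhang ov = (case ov of (U, V, l) \<Rightarrow> take (length U - l) U)"

definition right_overhang :: "word \<times> word \<times> nat \<Rightarrow> word" where
  "right_overhang ov = (case ov of (U, V, l) \<Rightarrow> drop l V)"

definition GO_edge :: "(letter \<Rightarrow> word) \<Rightarrow> word \<Rightarrow> word \<times> word \<times> nat \<Rightarrow> word \<Rightarrow> bool" where
  "GO_edge f s1 ov s2 \<longleftrightarrow> overhang f ov \<and> left_overhang ov = s1 \<and> right_overhang ov = s2"

end

theory Submission
  imports Defs
begin

lemma comm_pow: "y @ t = t @ y \<Longrightarrow> y @ concat (replicate n t) = concat (replicate n t) @ y"
proof (induction n)
  case 0 then show ?case by simp
next
  case (Suc n)
  have "y @ concat (replicate (Suc n) t) = (y @ t) @ concat (replicate n t)" by simp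
  also have "\<dots> = t @ (y @ concat (replicate n t))" using Suc.prems by simp
  also have "\<dots> = concat (replicate (Suc n) t) @ y" using Suc by simp
  finally show ?case .
qed

lemma comm_take: "y @ t = t @ y \<Longrightarrow> t \<noteq> [] \<Longrightarrow> y = take (length y) (concat (replicate (length y) t))"
proof -
  assume a: "y @ t = t @ y" and t: "t \<noteq> []"
  let ?n = "length y"
  have len: "length (concat (replicate ?n t)) = ?n * length t" by (simp add: length_concat sum_list_replicate)
  have "length (concat (replicate ?n t)) \<ge> ?n" using len t by (simp add: Suc_leI length_greater_0_conv)
  have "y = take ?n (y @ concat (replicate ?n t))" by simp
  also have "\<dots> = take ?n (concat (replicate ?n t) @ y)" using comm_pow[OF a] by simp
  also have "\<dots> = take ?n (concat (replicate ?n t))" using \<open>length (concat (replicate ?n t)) \<ge> ?n\<close> by simp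
  finally show ?thesis .
qed

lemma comm_eq: "x @ t = t @ x \<Longrightarrow> x' @ t = t @ x' \<Longrightarrow> t \<noteq> [] \<Longrightarrow> length x = length x' \<Longrightarrow> x = x'"
  by (metis comm_take)

lemma concat_len: "set us \<subseteq> {f La, f Lb} \<Longrightarrow> uniform k f \<Longrightarrow> length (concat us) = k * length us"
  by (induction us) (auto simp: uniform_def)

lemma suffix_long: "suffix x (a @ b) \<Longrightarrow> \<not> suffix x b \<Longrightarrow> length x > length b"
  by (metis linorder_not_less suffix_append suffix_length_suffix suffix_appendI suffix_order.order_refl)

lemma prefix_long: "prefix x (a @ b) \<Longrightarrow> \<not> prefix x a \<Longrightarrow> length x > length a"
  by (metis linorder_not_less prefix_length_prefix prefix_order.order_refl prefix_append)

lemma loop_shape: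
  assumes u: "uniform k f" and e: "GO_edge f s ov s"
  shows "\<exists>x. s \<noteq> [] \<and> ov = (s @ x, x @ s, length x) \<and> s @ x \<in> {f La, f Lb} \<and> x @ s \<in> {f La, f Lb}"
proof -
  obtain U V l where ov: "ov = (U, V, l)" by (cases ov)
  from e obtain us vs x where h: "us \<noteq> []" "vs \<noteq> []" "set us \<subseteq> {f La, f Lb}" "set vs \<subseteq> {f La, f Lb}"
    "U = concat us" "V = concat vs" "x \<noteq> []" "l = length x"
    "suffix x (concat us)" "\<not> suffix x (concat (tl us))"
    "prefix x (concat vs)" "\<not> prefix x (concat (butlast vs))"
    "x \<noteq> concat us \<or> x \<noteq> concat vs"
    "length (concat (butlast vs)) < length x - length (concat (tl us))"
    and L: "take (length U - l) U = s" and R: "drop l V = s"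
    unfolding GO_edge_def overhang_def left_overhang_def right_overhang_def ov by auto
  define m where "m = length us"
  define n where "n = length vs"
  have m1: "m \<ge> 1" "n \<ge> 1" using h(1,2) m_def n_def by (auto simp: Suc_leI length_greater_0_conv)
  have lU: "length U = k * m" using concat_len[OF h(3) u] h(5) m_def by simp
  have lV: "length V = k * n" using concat_len[OF h(4) u] h(6) n_def by simp
  have stl: "set (tl us) \<subseteq> {f La, f Lb}" using h(3) by (meson list.set_sel(2) subset_code(1) h(1))
  have sbl: "set (butlast vs) \<subseteq> {f La, f Lb}" using h(4) by (meson in_set_butlastD subset_code(1))
  have ltl: "length (concat (tl us)) = k * (m - 1)" using concat_len[OF stl u] m_def by simp
  have lbl: "length (concat (butlast vs)) = k * (n - 1)" using concat_len[OF sbl u] n_def by simp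
  have us_split: "concat us = hd us @ concat (tl us)" using h(1) by (cases us) auto
  have vs_split: "concat vs = concat (butlast vs) @ last vs" using h(2)
    by (metis append_butlast_last_id concat_append concat.simps self_append_conv)
  have g1: "length x > k * (m - 1)" using suffix_long[OF h(9)[unfolded us_split] h(10)] ltl by simp
  have g2: "length x > k * (n - 1)" using prefix_long[OF h(11)[unfolded vs_split] h(12)] lbl by simp
  have x1: "length x \<le> k * m" using suffix_length_le[OF h(9)] h(5) lU by simp
  have x2: "length x \<le> k * n" using prefix_length_le[OF h(11)] h(6) lV by simp
  have "length s = k * m - length x" using L lU h(8) by auto
  moreover have "length s = k * n - length x" using R lV h(8) by auto
  ultimately have "k * m = k * n" using x1 x2 by linarith
  hence "m = n" using x1 h(7) by (cases "k = 0") auto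
  have iv: "k * (n - 1) + k * (m - 1) < length x" using h(14) lbl ltl g1 by simp
  have "m = 1"
  proof (rule ccontr)
    assume "m \<noteq> 1"
    then obtain j where "m = Suc (Suc j)" using m1 by (metis One_nat_def Suc_le_D le_SucE le_zero_eq not0_implies_Suc)
    then show False using iv x1 \<open>m = n\<close> by (simp add: algebra_simps)
  qed
  then obtain u0 where us: "us = [u0]" using m_def h(1) by (cases us) auto
  from \<open>m = n\<close> \<open>m = 1\<close> obtain v0 where vs: "vs = [v0]" using n_def h(2) by (cases vs) auto
  have U: "U = u0" "V = v0" using h(5,6) us vs by auto
  have xu: "drop (length U - l) U = x" using h(9) us U h(8)
    by (metis concat.simps(1) concat.simps(2) self_append_conv suffix_def append_eq_conv_conj length_append diff_add_inverse2 length_drop add_diff_cancel_right')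
  have xv: "take l V = x" using h(11) vs U h(8)
    by (metis append_eq_conv_conj concat.simps(1) concat.simps(2) prefix_def self_append_conv)
  have Ue: "U = s @ x" using L xu by (metis append_take_drop_id)
  have Ve: "V = x @ s" using R xv by (metis append_take_drop_id)
  have "s \<noteq> []" using h(13) us vs U Ue Ve by auto
  moreover have "u0 \<in> {f La, f Lb}" "v0 \<in> {f La, f Lb}" using h(3,4) us vs by auto
  ultimately show ?thesis using ov U Ue Ve h(8) by auto
qed

theorem mainTheorem6:
  fixes f :: "letter \<Rightarrow> word" and k :: nat
  assumes "k \<ge> 2"
    and "uniform k f"
    and "circular f [La]"
  shows "\<not> (\<exists>s ov1 ov2. ov1 \<noteq> ov2 \<and> GO_edge f s ov1 s \<and> GO_edge f s ov2 s)"
proof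
  assume "\<exists>s ov1 ov2. ov1 \<noteq> ov2 \<and> GO_edge f s ov1 s \<and> GO_edge f s ov2 s"
  then obtain s ov1 ov2 where ne: "ov1 \<noteq> ov2" and e1: "GO_edge f s ov1 s" and e2: "GO_edge f s ov2 s" by blast
  obtain x1 where a: "s \<noteq> []" "ov1 = (s @ x1, x1 @ s, length x1)" "s @ x1 \<in> {f La, f Lb}" "x1 @ s \<in> {f La, f Lb}"
    using loop_shape[OF assms(2) e1] by blast
  obtain x2 where b: "ov2 = (s @ x2, x2 @ s, length x2)" "s @ x2 \<in> {f La, f Lb}" "x2 @ s \<in> {f La, f Lb}"
    using loop_shape[OF assms(2) e2] by blast
  have nx: "x1 \<noteq> x2" using ne a b by auto
  have "length (s @ x1) = length (s @ x2)"
    using a(3) b(2) assms(2) unfolding uniform_def by (auto simp del: length_append)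
  hence l: "length x1 = length x2" by simp
  have nx': "s @ x1 \<noteq> s @ x2" using nx by simp
  have X: "{f La, f Lb} = {s @ x1, s @ x2}" using a(3) b(2) nx' by (metis insert_commute insertE singletonD)
  have c1: "x1 @ s = s @ x1 \<or> x1 @ s = s @ x2" using a(4) X by auto
  have c2: "x2 @ s = s @ x1 \<or> x2 @ s = s @ x2" using b(3) X by auto
  show False
  proof (cases "x1 @ s = s @ x1")
    case True
    then have "x2 @ s = s @ x2" using c2 nx by (metis append_same_eq)
    then show ?thesis using comm_eq[OF True _ a(1) l] nx by auto
  next
    case False
    then have d1: "x1 @ s = s @ x2" using c1 by auto
    have d2: "x2 @ s = s @ x1" using c2 d1 nx by (metis append_same_eq)
    have "x1 @ (s @ s) = (s @ s) @ x1" using d1 d2 by (metis append.assoc)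
    moreover have "x2 @ (s @ s) = (s @ s) @ x2" using d1 d2 by (metis append.assoc)
    ultimately show ?thesis using comm_eq[of x1 "s@s" x2] a(1) l nx by auto
  qed
qed

end
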